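(* Let $\mathbf{N}$ be the operator on $L^2_2(\R,dx)_{\C}$ defined in the context below. Then (i) $\mathbf{N}^{-1}\begin{pmatrix}\mathbb{1}_{[0,t)}\\ 0\end{pmatrix}=\begin{pmatrix} f_1\\ f_2\end{pmatrix}=\mathbf{f}\in L^2_{2}([0,t),dx)_{\C}$, (ii) $\mathbf{N}^{-1}\begin{pmatrix}0\\ \mathbb{1}_{[0,t)}\end{pmatrix}=\begin{pmatrix} g_1\\ g_2\end{pmatrix}=\mathbf{g}\in L^2_{2}([0,t),dx)_{\C}$, where for $s\in[0,t)$ $$f_1(s):=i\cos(2ks)+i\frac{\sin(2kt)}{\cos(2kt)+1}\sin(2ks)=:g_2(s),$$ $$f_2(s):=i\frac{\sin(2kt)}{\cos(2kt)+1}\cos(2ks)-i\sin(2ks)=:-g_1(s)$$ (the functions being extended by $0$ outside $[0,t)$).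
   Context: Fix $0<t<\infty$ and a real constant $k$ (with $\cos(2kt)\neq -1$ so that the formulas make sense). On $L^2(\R)_{\C}$ let $P_{[0,t)}$ be multiplication by $\mathbb{1}_{[0,t)}$, $P_{[0,t)^c}=Id-P_{[0,t)}$, and let $A$ be the operator $(Af)(\tau)=\mathbb{1}_{[0,t)}(\tau)\int_0^\tau f(s)\,ds$, with adjoint (w.r.t. the bilinear pairing) $(A^*f)(\tau)=\mathbb{1}_{[0,t)}(\tau)\int_\tau^t f(s)\,ds$. Let $\mathbf{P}_{[0,t)}$, $\mathbf{P}_{[0,t)^c}$ denote these projections acting componentwise on $L^2_2(\R,dx)_{\C}=L^2(\R)_{\C}\oplus L^2(\R)_{\C}$. The operator $\mathbf{N}:L^2_{2}(\R,dx)_{\C}\to L^2_{2}(\R,dx)_{\C}$ is $$\mathbf{N}=\mathbf{P}_{[0,t)}\begin{pmatrix}-i\,Id & ik(A-A^* )\\ ik(A^*-A) & -i\,Id\end{pmatrix}\mathbf{P}_{[0,t)}+\mathbf{P}_{[0,t)^c},$$ which is bijective (it equals $\mathbf{Id}+\mathbf{K}+\mathbf{L}$ with $\mathbf{K}=-(i+1)\mathbf{P}_{[0,t)}$ and $\mathbf{L}$ the magnetic-potential operator matrix $\mathbf{P}_{[0,t)}\begin{pmatrix}0&ik(A-A^* )\\ ik(A^*-A)&0\end{pmatrix}\mathbf{P}_{[0,t)}$). *)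

theory Defs
  imports "HOL-Analysis.Analysis"
begin

definition L2 :: "(real \<Rightarrow> complex) set" where
  "L2 = {f. f \<in> borel_measurable lborel \<and> integrable lborel (\<lambda>x. (norm (f x))\<^sup>2)}"

definition L2_2 :: "((real \<Rightarrow> complex) \<times> (real \<Rightarrow> complex)) set" where
  "L2_2 = L2 \<times> L2"

definition L2_2_on :: "real set \<Rightarrow> ((real \<Rightarrow> complex) \<times> (real \<Rightarrow> complex)) set" where
  "L2_2_on S = {p \<in> L2_2. (\<forall>x. x \<notin> S \<longrightarrow> fst p x = 0 \<and> snd p x = 0)}"

definition ind :: "real \<Rightarrow> real \<Rightarrow> complex" where
  "ind t x = indicator {0..<t} x"

definition Aop :: "real \<Rightarrow> (real \<Rightarrow> complex) \<Rightarrow> real \<Rightarrow> complex" where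
  "Aop t f \<tau> = ind t \<tau> * (LINT s:{0..\<tau>}|lborel. f s)"

definition Aadj :: "real \<Rightarrow> (real \<Rightarrow> complex) \<Rightarrow> real \<Rightarrow> complex" where
  "Aadj t f \<tau> = ind t \<tau> * (LINT s:{\<tau>..t}|lborel. f s)"

definition Pin :: "real \<Rightarrow> (real \<Rightarrow> complex) \<Rightarrow> real \<Rightarrow> complex" where
  "Pin t f x = ind t x * f x"

definition Pout :: "real \<Rightarrow> (real \<Rightarrow> complex) \<Rightarrow> real \<Rightarrow> complex" where
  "Pout t f x = (1 - ind t x) * f x"

text \<open>The operator N = P [[-i Id, ik(A-A*)],[ik(A*-A), -i Id]] P + P^c.\<close>
definition Nop :: "real \<Rightarrow> real \<Rightarrow> (real \<Rightarrow> complex) \<times> (real \<Rightarrow> complex)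
                    \<Rightarrow> (real \<Rightarrow> complex) \<times> (real \<Rightarrow> complex)" where
  "Nop t k p = (let u = Pin t (fst p); v = Pin t (snd p) in
     (\<lambda>x. Pin t (\<lambda>y. - \<i> * u y + \<i> * of_real k * (Aop t v y - Aadj t v y)) x + Pout t (fst p) x,
      \<lambda>x. Pin t (\<lambda>y. \<i> * of_real k * (Aadj t u y - Aop t u y) - \<i> * v y) x + Pout t (snd p) x))"

definition Ninv :: "real \<Rightarrow> real \<Rightarrow> (real \<Rightarrow> complex) \<times> (real \<Rightarrow> complex)
                    \<Rightarrow> (real \<Rightarrow> complex) \<times> (real \<Rightarrow> complex)" where
  "Ninv t k = inv_into L2_2 (Nop t k)"

end

theory Submission imports Defs begin

definition LI :: "(real \<Rightarrow> complex) \<Rightarrow> bool" where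
  "LI f = (\<forall>a b. set_integrable lborel {a..b} f)"

lemma ind_meas[measurable]: "ind t \<in> borel_measurable borel"
  unfolding ind_def by measurable

lemma ind_cases: "ind t x = (if 0 \<le> x \<and> x < t then 1 else 0)"
  by (simp add: ind_def indicator_def)

lemma norm_ind_le: "norm (ind t x) \<le> 1"
  by (simp add: ind_cases)

lemma set_int_ind:
  assumes "set_integrable lborel A f"
  shows "set_integrable lborel A (\<lambda>s. ind t s * f s)"
proof -
  have i: "integrable lborel (\<lambda>s. indicator A s *\<^sub>R f s)"
    using assms unfolding set_integrable_def .
  have "integrable lborel (\<lambda>s. ind t s * (indicator A s *\<^sub>R f s))"
  proof (rule Bochner_Integration.integrable_bound[OF i])
    show "(\<lambda>s. ind t s * (indicator A s *\<^sub>R f s)) \<in> borel_measurable lborel"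
      using borel_measurable_integrable[OF i] by measurable
    show "AE x in lborel. norm (ind t x * (indicator A x *\<^sub>R f x)) \<le> norm (indicator A x *\<^sub>R f x)"
      by (auto simp: norm_mult ind_cases)
  qed
  then show ?thesis unfolding set_integrable_def
    by (simp add: algebra_simps)
qed

lemma L2_LI:
  assumes "f \<in> L2" shows "LI f"
  unfolding LI_def
proof (intro allI)
  fix a b :: real
  have m: "f \<in> borel_measurable lborel" and sq: "integrable lborel (\<lambda>x. (norm (f x))\<^sup>2)"
    using assms by (auto simp: L2_def)
  have i1: "integrable lborel (\<lambda>x. indicator {a..b} x *\<^sub>R (1::real))"
    by (rule borel_integrable_compact) auto
  have "integrable lborel (\<lambda>x. indicator {a..b} x *\<^sub>R (1::real) + (norm (f x))\<^sup>2)"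
    using i1 sq by simp
  then show "set_integrable lborel {a..b} f"
    unfolding set_integrable_def
  proof (rule Bochner_Integration.integrable_bound)
    show "(\<lambda>x. indicator {a..b} x *\<^sub>R f x) \<in> borel_measurable lborel" using m by measurable
    show "AE x in lborel. norm (indicator {a..b} x *\<^sub>R f x) \<le> norm (indicator {a..b} x *\<^sub>R (1::real) + (norm (f x))\<^sup>2)"
    proof (intro AE_I2)
      fix x
      have "norm (f x) \<le> 1 + (norm (f x))\<^sup>2"
        using zero_le_power2[of "norm (f x) - 1"] norm_ge_zero[of "f x"]
        unfolding power2_eq_square by (simp add: algebra_simps) (smt (verit) norm_ge_zero)
      then show "norm (indicator {a..b} x *\<^sub>R f x) \<le> norm (indicator {a..b} x *\<^sub>R (1::real) + (norm (f x))\<^sup>2)"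
        by (auto simp: indicator_def)
    qed
  qed
qed

lemma cont_LI: assumes g: "continuous_on UNIV g" shows "LI g"
  unfolding LI_def set_integrable_def
  by (intro allI borel_integrable_compact compact_Icc continuous_on_subset[OF g subset_UNIV])

lemma LINT_ind_LI:
  assumes "LI f"
  shows "(LINT s:{a..b}|lborel. ind t s * f s) = integral {a..b} (\<lambda>s. ind t s * f s)"
    "(\<lambda>s. ind t s * f s) integrable_on {a..b}"
  using set_borel_integral_eq_integral[OF set_int_ind[of "{a..b}" f t]] assms
  by (auto simp: LI_def)

lemma LI_integrable_on:
  assumes "LI f" shows "f integrable_on {a..b}"
  using set_borel_integral_eq_integral(1)[of "{a..b}" f] assms by (auto simp: LI_def)

lemma LINT_ind_cont:
  assumes g: "continuous_on UNIV g" and "0 \<le> a" "b \<le> t"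
  shows "(LINT s:{a..b}|lborel. ind t s * g s) = integral {a..b} g"
proof -
  have "(LINT s:{a..b}|lborel. ind t s * g s) = integral {a..b} (\<lambda>s. ind t s * g s)"
    using LINT_ind_LI(1)[OF cont_LI[OF g]] .
  also have "\<dots> = integral {a..b} g"
    by (rule integral_spike[of "{t}"]) (use assms in \<open>auto simp: ind_cases\<close>)
  finally show ?thesis .
qed

lemma cont_L2:
  assumes g: "continuous_on UNIV g"
  shows "(\<lambda>s. ind t s * g s) \<in> L2"
proof -
  have gm[measurable]: "g \<in> borel_measurable borel" using borel_measurable_continuous_onI[OF g] .
  have i: "integrable lborel (\<lambda>x. indicator {0..t} x *\<^sub>R (norm (g x))\<^sup>2)"
    by (rule borel_integrable_compact) (auto intro!: continuous_intros continuous_on_subset[OF g])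
  have "integrable lborel (\<lambda>x. (norm (ind t x * g x))\<^sup>2)"
  proof (rule Bochner_Integration.integrable_bound[OF i])
    show "(\<lambda>x. (norm (ind t x * g x))\<^sup>2) \<in> borel_measurable lborel" by measurable
    show "AE x in lborel. norm ((norm (ind t x * g x))\<^sup>2) \<le> norm (indicator {0..t} x *\<^sub>R (norm (g x))\<^sup>2)"
      by (intro AE_I2) (auto simp: ind_cases indicator_def norm_mult)
  qed
  moreover have "(\<lambda>s. ind t s * g s) \<in> borel_measurable lborel" by measurable
  ultimately show ?thesis by (simp add: L2_def)
qed

definition Htr :: "real \<Rightarrow> complex \<Rightarrow> complex \<Rightarrow> real \<Rightarrow> complex" where
  "Htr k P Q s = (of_real (sin (2 * k * s)) * P - of_real (cos (2 * k * s)) * Q) / 2"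

definition gtr :: "real \<Rightarrow> complex \<Rightarrow> complex \<Rightarrow> real \<Rightarrow> complex" where
  "gtr k P Q s = of_real (cos (2 * k * s)) * P + of_real (sin (2 * k * s)) * Q"

lemma gtr_cont: "continuous_on UNIV (gtr k P Q)"
  unfolding gtr_def by (intro continuous_intros)

lemma Htr_deriv: "(Htr k P Q has_vector_derivative (of_real k * gtr k P Q s)) (at s within S)"
proof -
  have eq: "((of_real (cos (2 * k * s) * (2*k)) * P - of_real (- sin (2 * k * s) * (2*k)) * Q) / 2)
     = of_real k * gtr k P Q s"
    by (simp add: gtr_def algebra_simps)
  have "((\<lambda>s. (of_real (sin (2 * k * s)) * P - of_real (cos (2 * k * s)) * Q) / 2) has_vector_derivative
     ((of_real (cos (2 * k * s) * (2*k)) * P - of_real (- sin (2 * k * s) * (2*k)) * Q) / 2)) (at s within S)"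
    unfolding divide_inverse
    by (intro derivative_intros has_vector_derivative_of_real) (auto intro!: derivative_eq_intros)
  then show ?thesis unfolding Htr_def[abs_def] eq .
qed

lemma trig_int:
  assumes "a \<le> b"
  shows "of_real k * integral {a..b} (gtr k P Q) = Htr k P Q b - Htr k P Q a"
proof -
  have "((\<lambda>s. of_real k * gtr k P Q s) has_integral (Htr k P Q b - Htr k P Q a)) {a..b}"
    by (rule fundamental_theorem_of_calculus[OF assms Htr_deriv])
  from integral_unique[OF this] show ?thesis by simp
qed

lemma Pin_ind: "Pin t (\<lambda>s. ind t s * g s) = (\<lambda>s. ind t s * g s)"
  by (auto simp: Pin_def ind_cases fun_eq_iff)

lemma Aop_trig:
  assumes "0 \<le> x" "x < t"
  shows "of_real k * Aop t (\<lambda>s. ind t s * gtr k P Q s) x = Htr k P Q x - Htr k P Q 0"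
  using assms LINT_ind_cont[OF gtr_cont, of 0 x t k P Q] trig_int[of 0 x k P Q]
  by (simp add: Aop_def ind_cases)

lemma Aadj_trig:
  assumes "0 \<le> x" "x < t"
  shows "of_real k * Aadj t (\<lambda>s. ind t s * gtr k P Q s) x = Htr k P Q t - Htr k P Q x"
  using assms LINT_ind_cont[OF gtr_cont, of x t t k P Q] trig_int[of x t k P Q]
  by (simp add: Aadj_def ind_cases)

lemma c_ids:
  fixes k t :: real
  assumes "cos (2 * k * t) \<noteq> -1"
  defines "c \<equiv> sin (2 * k * t) / (cos (2 * k * t) + 1)"
  shows "c * (cos (2 * k * t) + 1) = sin (2 * k * t)" "c * sin (2 * k * t) = 1 - cos (2 * k * t)"
proof -
  have nz: "cos (2 * k * t) + 1 \<noteq> 0" using assms(1) by linarith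
  show 1: "c * (cos (2 * k * t) + 1) = sin (2 * k * t)" using nz by (simp add: c_def)
  have "c * sin (2 * k * t) * (cos (2 * k * t) + 1) = (1 - cos (2 * k * t)) * (cos (2 * k * t) + 1)"
  proof -
    have "c * sin (2 * k * t) * (cos (2 * k * t) + 1) = sin (2 * k * t) * (c * (cos (2 * k * t) + 1))"
      by (simp add: algebra_simps)
    also have "\<dots> = sin (2 * k * t) * sin (2 * k * t)" using 1 by (rule arg_cong)
    also have "\<dots> = (1 - cos (2 * k * t)) * (cos (2 * k * t) + 1)"
      using sin_squared_eq[of "2*k*t"] by (simp add: power2_eq_square algebra_simps)
    finally show ?thesis .
  qed
  then show "c * sin (2 * k * t) = 1 - cos (2 * k * t)" by (rule mult_right_cancel[OF nz, THEN iffD1])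
qed

lemma Nop_f:
  fixes k t :: real
  assumes "cos (2 * k * t) \<noteq> -1"
  defines "c \<equiv> sin (2 * k * t) / (cos (2 * k * t) + 1)"
  shows "Nop t k (\<lambda>s. ind t s * gtr k \<i> (\<i> * c) s, \<lambda>s. ind t s * gtr k (\<i> * c) (-\<i>) s) = (ind t, \<lambda>_. 0)"
    "Nop t k (\<lambda>s. ind t s * gtr k (-(\<i> * c)) \<i> s, \<lambda>s. ind t s * gtr k \<i> (\<i> * c) s) = (\<lambda>_. 0, ind t)"
proof -
  note ci = c_ids[OF assms(1), folded c_def]
  have e: "\<i> * of_real k * (a - b) = \<i> * (of_real k * a - of_real k * b)" for a b :: complex
    by (simp add: algebra_simps)
  show "Nop t k (\<lambda>s. ind t s * gtr k \<i> (\<i> * c) s, \<lambda>s. ind t s * gtr k (\<i> * c) (-\<i>) s) = (ind t, \<lambda>_. 0)"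
  proof -
    have "(\<lambda>x. Pin t (\<lambda>y. - \<i> * (ind t y * gtr k \<i> (\<i> * c) y) + \<i> * of_real k *
            (Aop t (\<lambda>s. ind t s * gtr k (\<i> * c) (-\<i>) s) y - Aadj t (\<lambda>s. ind t s * gtr k (\<i> * c) (-\<i>) s) y)) x
          + Pout t (\<lambda>s. ind t s * gtr k \<i> (\<i> * c) s) x) = ind t"
    proof
      fix x show "Pin t (\<lambda>y. - \<i> * (ind t y * gtr k \<i> (\<i> * c) y) + \<i> * of_real k *
            (Aop t (\<lambda>s. ind t s * gtr k (\<i> * c) (-\<i>) s) y - Aadj t (\<lambda>s. ind t s * gtr k (\<i> * c) (-\<i>) s) y)) x
          + Pout t (\<lambda>s. ind t s * gtr k \<i> (\<i> * c) s) x = ind t x"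
      proof (cases "0 \<le> x \<and> x < t")
        case True
        then show ?thesis
          unfolding Pin_def Pout_def e Aop_trig[OF conjunct1[OF True] conjunct2[OF True]]
              Aadj_trig[OF conjunct1[OF True] conjunct2[OF True]]
          using ci apply (simp add: ind_cases Htr_def gtr_def complex_eq_iff algebra_simps)
          apply (simp_all add: field_simps)?
          apply linarith?
          done
      next
        case False
        then show ?thesis by (auto simp: Pin_def Pout_def ind_cases)
      qed
    qed
    moreover
    have "(\<lambda>x. Pin t (\<lambda>y. \<i> * of_real k * (Aadj t (\<lambda>s. ind t s * gtr k \<i> (\<i> * c) s) y - Aop t (\<lambda>s. ind t s * gtr k \<i> (\<i> * c) s) y)
            - \<i> * (ind t y * gtr k (\<i> * c) (-\<i>) y)) x
          + Pout t (\<lambda>s. ind t s * gtr k (\<i> * c) (-\<i>) s) x) = (\<lambda>_. 0)"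
    proof
      fix x show "Pin t (\<lambda>y. \<i> * of_real k * (Aadj t (\<lambda>s. ind t s * gtr k \<i> (\<i> * c) s) y - Aop t (\<lambda>s. ind t s * gtr k \<i> (\<i> * c) s) y)
            - \<i> * (ind t y * gtr k (\<i> * c) (-\<i>) y)) x
          + Pout t (\<lambda>s. ind t s * gtr k (\<i> * c) (-\<i>) s) x = 0"
      proof (cases "0 \<le> x \<and> x < t")
        case True
        then show ?thesis
          unfolding Pin_def Pout_def e Aop_trig[OF conjunct1[OF True] conjunct2[OF True]]
              Aadj_trig[OF conjunct1[OF True] conjunct2[OF True]]
          using ci apply (simp add: ind_cases Htr_def gtr_def complex_eq_iff algebra_simps)
          apply (simp_all add: field_simps)?
          apply linarith?
          done
      next
        case False
        then show ?thesis by (auto simp: Pin_def Pout_def ind_cases)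
      qed
    qed
    ultimately show ?thesis unfolding Nop_def Let_def prod.sel Pin_ind by (simp only: prod.inject)
  qed
  show "Nop t k (\<lambda>s. ind t s * gtr k (-(\<i> * c)) \<i> s, \<lambda>s. ind t s * gtr k \<i> (\<i> * c) s) = (\<lambda>_. 0, ind t)"
  proof -
    have "(\<lambda>x. Pin t (\<lambda>y. - \<i> * (ind t y * gtr k (-(\<i> * c)) \<i> y) + \<i> * of_real k *
            (Aop t (\<lambda>s. ind t s * gtr k \<i> (\<i> * c) s) y - Aadj t (\<lambda>s. ind t s * gtr k \<i> (\<i> * c) s) y)) x
          + Pout t (\<lambda>s. ind t s * gtr k (-(\<i> * c)) \<i> s) x) = (\<lambda>_. 0)"
    proof
      fix x show "Pin t (\<lambda>y. - \<i> * (ind t y * gtr k (-(\<i> * c)) \<i> y) + \<i> * of_real k *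
            (Aop t (\<lambda>s. ind t s * gtr k \<i> (\<i> * c) s) y - Aadj t (\<lambda>s. ind t s * gtr k \<i> (\<i> * c) s) y)) x
          + Pout t (\<lambda>s. ind t s * gtr k (-(\<i> * c)) \<i> s) x = 0"
      proof (cases "0 \<le> x \<and> x < t")
        case True
        then show ?thesis
          unfolding Pin_def Pout_def e Aop_trig[OF conjunct1[OF True] conjunct2[OF True]]
              Aadj_trig[OF conjunct1[OF True] conjunct2[OF True]]
          using ci apply (simp add: ind_cases Htr_def gtr_def complex_eq_iff algebra_simps)
          apply (simp_all add: field_simps)?
          apply linarith?
          done
      next
        case False
        then show ?thesis by (auto simp: Pin_def Pout_def ind_cases)
      qed
    qed
    moreover
    have "(\<lambda>x. Pin t (\<lambda>y. \<i> * of_real k * (Aadj t (\<lambda>s. ind t s * gtr k (-(\<i> * c)) \<i> s) y - Aop t (\<lambda>s. ind t s * gtr k (-(\<i> * c)) \<i> s) y)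
            - \<i> * (ind t y * gtr k \<i> (\<i> * c) y)) x
          + Pout t (\<lambda>s. ind t s * gtr k \<i> (\<i> * c) s) x) = ind t"
    proof
      fix x show "Pin t (\<lambda>y. \<i> * of_real k * (Aadj t (\<lambda>s. ind t s * gtr k (-(\<i> * c)) \<i> s) y - Aop t (\<lambda>s. ind t s * gtr k (-(\<i> * c)) \<i> s) y)
            - \<i> * (ind t y * gtr k \<i> (\<i> * c) y)) x
          + Pout t (\<lambda>s. ind t s * gtr k \<i> (\<i> * c) s) x = ind t x"
      proof (cases "0 \<le> x \<and> x < t")
        case True
        then show ?thesis
          unfolding Pin_def Pout_def e Aop_trig[OF conjunct1[OF True] conjunct2[OF True]]
              Aadj_trig[OF conjunct1[OF True] conjunct2[OF True]]
          using ci apply (simp add: ind_cases Htr_def gtr_def complex_eq_iff algebra_simps)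
          apply (simp_all add: field_simps)?
          apply linarith?
          done
      next
        case False
        then show ?thesis by (auto simp: Pin_def Pout_def ind_cases)
      qed
    qed
    ultimately show ?thesis unfolding Nop_def Let_def prod.sel Pin_ind by (simp only: prod.inject)
  qed
qed

lemma LI_diff: "LI f \<Longrightarrow> LI g \<Longrightarrow> LI (\<lambda>x. f x - g x)"
  unfolding LI_def set_integrable_def
  by (auto simp: scaleR_diff_right intro!: Bochner_Integration.integrable_diff)

lemma core:
  fixes k t :: real and d1 d2 :: "real \<Rightarrow> complex"
  assumes t: "0 < t" and cs: "cos (2 * k * t) \<noteq> -1" and L1: "LI d1" and L2: "LI d2"
    and out: "\<And>x. \<not> (0 \<le> x \<and> x < t) \<Longrightarrow> d1 x = 0 \<and> d2 x = 0"
    and in1: "\<And>x. 0 \<le> x \<and> x < t \<Longrightarrow> d1 x = of_real k *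
        (integral {0..x} (\<lambda>s. ind t s * d2 s) - integral {x..t} (\<lambda>s. ind t s * d2 s))"
    and in2: "\<And>x. 0 \<le> x \<and> x < t \<Longrightarrow> d2 x = of_real k *
        (integral {x..t} (\<lambda>s. ind t s * d1 s) - integral {0..x} (\<lambda>s. ind t s * d1 s))"
  shows "d1 = (\<lambda>_. 0) \<and> d2 = (\<lambda>_. 0)"
proof -
  define u1 where "u1 = (\<lambda>s. ind t s * d1 s)"
  define u2 where "u2 = (\<lambda>s. ind t s * d2 s)"
  have iu1: "u1 integrable_on {0..t}" and iu2: "u2 integrable_on {0..t}"
    using LINT_ind_LI(2)[OF L1] LINT_ind_LI(2)[OF L2] by (auto simp: u1_def u2_def)
  define U where "U x = integral {0..x} u1" for x
  define V where "V x = integral {0..x} u2" for x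
  have combU: "integral {x..t} u1 = U t - U x" if "0 \<le> x" "x \<le> t" for x
    using Henstock_Kurzweil_Integration.integral_combine[OF that iu1] by (simp add: U_def algebra_simps)
  have combV: "integral {x..t} u2 = V t - V x" if "0 \<le> x" "x \<le> t" for x
    using Henstock_Kurzweil_Integration.integral_combine[OF that iu2] by (simp add: V_def algebra_simps)
  define hU where "hU s = of_real k * (2 * V s - V t)" for s
  define hV where "hV s = of_real k * (U t - 2 * U s)" for s
  have d1x: "d1 x = hU x" if "0 \<le> x" "x < t" for x
  proof -
    have "d1 x = of_real k * (V x - integral {x..t} u2)" unfolding V_def u2_def using in1[of x] that by simp
    also have "\<dots> = hU x" unfolding combV[OF that(1) less_imp_le[OF that(2)]] hU_def by (simp add: algebra_simps)
    finally show ?thesis .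
  qed
  have d2x: "d2 x = hV x" if "0 \<le> x" "x < t" for x
  proof -
    have "d2 x = of_real k * (integral {x..t} u1 - U x)" unfolding U_def u1_def using in2[of x] that by simp
    also have "\<dots> = hV x" unfolding combU[OF that(1) less_imp_le[OF that(2)]] hV_def by (simp add: algebra_simps)
    finally show ?thesis .
  qed
  have cU: "continuous_on {0..t} U" unfolding U_def by (rule indefinite_integral_continuous_1[OF iu1])
  have cV: "continuous_on {0..t} V" unfolding V_def by (rule indefinite_integral_continuous_1[OF iu2])
  have chU: "continuous_on {0..t} hU" unfolding hU_def by (intro continuous_intros cV)
  have chV: "continuous_on {0..t} hV" unfolding hV_def by (intro continuous_intros cU)
  have Ueq: "U x = integral {0..x} hU" if "x \<in> {0..t}" for x
    unfolding U_def
    by (rule integral_spike[of "{t}"]) (use that d1x in \<open>auto simp: u1_def ind_cases\<close>)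
  have Veq: "V x = integral {0..x} hV" if "x \<in> {0..t}" for x
    unfolding V_def
    by (rule integral_spike[of "{t}"]) (use that d2x in \<open>auto simp: u2_def ind_cases\<close>)
  have dU: "(U has_vector_derivative hU x) (at x within {0..t})" if "x \<in> {0..t}" for x
    by (rule has_vector_derivative_transform[OF that Ueq integral_has_vector_derivative[OF chU that]])
  have dV: "(V has_vector_derivative hV x) (at x within {0..t})" if "x \<in> {0..t}" for x
    by (rule has_vector_derivative_transform[OF that Veq integral_has_vector_derivative[OF chV that]])
  define C where "C s = (of_real (cos (2 * k * s)) :: complex)" for s
  define S where "S s = (of_real (sin (2 * k * s)) :: complex)" for s
  have dC: "(C has_vector_derivative of_real (- sin (2 * k * x) * (2 * k))) (at x within {0..t})" for x
    unfolding C_def[abs_def]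
    by (rule has_vector_derivative_of_real) (auto intro!: derivative_eq_intros)
  have dS: "(S has_vector_derivative of_real (cos (2 * k * x) * (2 * k))) (at x within {0..t})" for x
    unfolding S_def[abs_def]
    by (rule has_vector_derivative_of_real) (auto intro!: derivative_eq_intros)
  define W where "W s = U s - U t / 2" for s
  define Z where "Z s = V s - V t / 2" for s
  have dW: "(W has_vector_derivative hU x) (at x within {0..t})" if "x \<in> {0..t}" for x
    using has_vector_derivative_diff[OF dU[OF that] has_vector_derivative_const[of "U t / 2"]]
    unfolding W_def[abs_def] by simp
  have dZ: "(Z has_vector_derivative hV x) (at x within {0..t})" if "x \<in> {0..t}" for x
    using has_vector_derivative_diff[OF dV[OF that] has_vector_derivative_const[of "V t / 2"]]
    unfolding Z_def[abs_def] by simp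
  define E where "E s = W s * C s - Z s * S s" for s
  define F where "F s = W s * S s + Z s * C s" for s
  have hUZ: "hU s = 2 * of_real k * Z s" for s by (simp add: hU_def Z_def algebra_simps)
  have hVW: "hV s = - 2 * of_real k * W s" for s by (simp add: hV_def W_def algebra_simps)
  have dE: "(E has_vector_derivative 0) (at x within {0..t})" if "x \<in> {0..t}" for x
  proof -
    have "(E has_vector_derivative
      ((W x * of_real (- sin (2 * k * x) * (2 * k)) + hU x * C x) -
       (Z x * of_real (cos (2 * k * x) * (2 * k)) + hV x * S x))) (at x within {0..t})"
      unfolding E_def[abs_def]
      by (rule has_vector_derivative_diff[OF has_vector_derivative_mult[OF dW[OF that] dC]
            has_vector_derivative_mult[OF dZ[OF that] dS]])
    moreover have "((W x * of_real (- sin (2 * k * x) * (2 * k)) + hU x * C x) -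
       (Z x * of_real (cos (2 * k * x) * (2 * k)) + hV x * S x)) = 0"
      unfolding hUZ hVW C_def S_def by (simp add: algebra_simps)
    ultimately show ?thesis by simp
  qed
  have dF: "(F has_vector_derivative 0) (at x within {0..t})" if "x \<in> {0..t}" for x
  proof -
    have "(F has_vector_derivative
      ((W x * of_real (cos (2 * k * x) * (2 * k)) + hU x * S x) +
       (Z x * of_real (- sin (2 * k * x) * (2 * k)) + hV x * C x))) (at x within {0..t})"
      unfolding F_def[abs_def]
      by (rule has_vector_derivative_add[OF has_vector_derivative_mult[OF dW[OF that] dS]
            has_vector_derivative_mult[OF dZ[OF that] dC]])
    moreover have "((W x * of_real (cos (2 * k * x) * (2 * k)) + hU x * S x) +
       (Z x * of_real (- sin (2 * k * x) * (2 * k)) + hV x * C x)) = 0"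
      unfolding hUZ hVW C_def S_def by (simp add: algebra_simps)
    ultimately show ?thesis by simp
  qed
  obtain cE where cE: "\<And>x. x \<in> {0..t} \<Longrightarrow> E x = cE"
    using has_vector_derivative_zero_constant[of "{0..t}" E] dE by auto
  obtain cF where cF: "\<And>x. x \<in> {0..t} \<Longrightarrow> F x = cF"
    using has_vector_derivative_zero_constant[of "{0..t}" F] dF by auto
  have t0: "0 \<in> {0..t}" "t \<in> {0..t}" using t by auto
  have U0: "U 0 = 0" and V0: "V 0 = 0" by (simp_all add: U_def V_def)
  have Et: "E t = E 0" and Ft: "F t = F 0" using cE[OF t0(1)] cE[OF t0(2)] cF[OF t0(1)] cF[OF t0(2)] by auto
  have C0: "C 0 = 1" "S 0 = 0" by (simp_all add: C_def S_def)
  have CS: "C s * C s + S s * S s = 1" for s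
  proof -
    have "C s * C s + S s * S s = of_real (cos (2 * k * s) * cos (2 * k * s) + sin (2 * k * s) * sin (2 * k * s))"
      unfolding C_def S_def of_real_mult[symmetric] of_real_add[symmetric] ..
    also have "\<dots> = 1" by (simp only: sin_cos_squared_add3 of_real_1)
    finally show ?thesis .
  qed
  have eq1: "U t * C t - V t * S t = - U t"
    using Et U0 V0 C0 by (simp add: E_def W_def Z_def field_simps)
  have eq2: "U t * S t + V t * C t = - V t"
    using Ft U0 V0 C0 by (simp add: F_def W_def Z_def field_simps)
  have a1: "U t * (1 + C t) = V t * S t"
  proof -
    have "U t * (1 + C t) = U t + (U t * C t - V t * S t) + V t * S t" by (simp add: algebra_simps)
    then show ?thesis unfolding eq1 by simp
  qed
  have a2: "V t * (1 + C t) = - (U t * S t)"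
  proof -
    have "V t * (1 + C t) = (U t * S t + V t * C t) + V t - U t * S t" by (simp add: algebra_simps)
    then show ?thesis unfolding eq2 by simp
  qed
  have "U t * (2 + 2 * C t) = (1 + C t) * (U t * (1 + C t)) + S t * (U t * S t) - U t * (C t * C t + S t * S t - 1)"
    by (simp add: algebra_simps)
  also have "\<dots> = (1 + C t) * (V t * S t) - S t * (V t * (1 + C t))"
    using CS[of t] a1 a2 by simp
  also have "\<dots> = 0" by (simp add: algebra_simps)
  finally have "U t * (2 + 2 * C t) = 0" .
  moreover have "2 + 2 * C t \<noteq> 0"
  proof
    assume "2 + 2 * C t = 0"
    then have "of_real (2 + 2 * cos (2 * k * t)) = (0::complex)" by (simp add: C_def)
    then have "2 + 2 * cos (2 * k * t) = 0" by (simp only: of_real_eq_0_iff)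
    with cs show False by linarith
  qed
  ultimately have Ut: "U t = 0" by simp
  have "1 + C t \<noteq> 0"
  proof
    assume "1 + C t = 0"
    then have "2 * (1 + C t) = 0" by simp
    then show False using \<open>2 + 2 * C t \<noteq> 0\<close> by (simp add: distrib_left)
  qed
  with a2 Ut have Vt: "V t = 0" by simp
  have E0: "E x = 0" and F0: "F x = 0" if "x \<in> {0..t}" for x
    using cE[OF that] cE[OF t0(1)] cF[OF that] cF[OF t0(1)] U0 V0 Ut Vt C0
    by (simp_all add: E_def F_def W_def Z_def)
  have Wx: "W x = 0" and Zx: "Z x = 0" if "x \<in> {0..t}" for x
  proof -
    have "W x = C x * E x + S x * F x - W x * (C x * C x + S x * S x - 1)"
      by (simp add: E_def F_def algebra_simps)
    then show "W x = 0" using E0[OF that] F0[OF that] CS[of x] by simp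
    have "Z x = C x * F x - S x * E x - Z x * (C x * C x + S x * S x - 1)"
      by (simp add: E_def F_def algebra_simps)
    then show "Z x = 0" using E0[OF that] F0[OF that] CS[of x] by simp
  qed
  show ?thesis
  proof (intro conjI ext)
    fix x
    show "d1 x = 0"
    proof (cases "0 \<le> x \<and> x < t")
      case True
      then have "x \<in> {0..t}" by auto
      then show ?thesis using d1x[of x] True hUZ[of x] Zx by simp
    qed (use out in auto)
    show "d2 x = 0"
    proof (cases "0 \<le> x \<and> x < t")
      case True
      then have "x \<in> {0..t}" by auto
      then show ?thesis using d2x[of x] True hVW[of x] Wx by simp
    qed (use out in auto)
  qed
qed

lemma Nop_LI:
  assumes L1: "LI p1" and L2: "LI p2"
  shows "fst (Nop t k (p1,p2)) x = (if 0 \<le> x \<and> x < t then - \<i> * p1 x + \<i> * of_real k *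
            (integral {0..x} (\<lambda>s. ind t s * p2 s) - integral {x..t} (\<lambda>s. ind t s * p2 s)) else p1 x)"
    "snd (Nop t k (p1,p2)) x = (if 0 \<le> x \<and> x < t then \<i> * of_real k *
            (integral {x..t} (\<lambda>s. ind t s * p1 s) - integral {0..x} (\<lambda>s. ind t s * p1 s)) - \<i> * p2 x else p2 x)"
  unfolding Nop_def Let_def prod.sel Pin_def[abs_def] Pout_def Aop_def Aadj_def
    LINT_ind_LI(1)[OF L1] LINT_ind_LI(1)[OF L2]
  by (simp_all add: ind_cases)

lemma integral_ind_diff:
  assumes "LI f" "LI g"
  shows "integral {a..b} (\<lambda>s. ind t s * (f s - g s)) =
    integral {a..b} (\<lambda>s. ind t s * f s) - integral {a..b} (\<lambda>s. ind t s * g s)"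
  using integral_diff[OF LINT_ind_LI(2)[OF assms(1)] LINT_ind_LI(2)[OF assms(2)]]
  by (simp add: right_diff_distrib)

lemma Nop_inj:
  fixes t k :: real
  assumes t: "0 < t" and cs: "cos (2 * k * t) \<noteq> -1"
  shows "inj_on (Nop t k) L2_2"
proof (rule inj_onI)
  fix p q assume pL: "p \<in> L2_2" and qL: "q \<in> L2_2" and eq: "Nop t k p = Nop t k q"
  obtain p1 p2 where p: "p = (p1, p2)" by (cases p)
  obtain q1 q2 where q: "q = (q1, q2)" by (cases q)
  have Lp1: "LI p1" and Lp2: "LI p2" and Lq1: "LI q1" and Lq2: "LI q2"
    using pL qL by (auto simp: p q L2_2_def intro: L2_LI)
  have e1: "fst (Nop t k (p1,p2)) x = fst (Nop t k (q1,q2)) x" for x using eq p q by simp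
  have e2: "snd (Nop t k (p1,p2)) x = snd (Nop t k (q1,q2)) x" for x using eq p q by simp
  note N = Nop_LI[OF Lp1 Lp2] Nop_LI[OF Lq1 Lq2]
  have "(\<lambda>x. p1 x - q1 x) = (\<lambda>_. 0) \<and> (\<lambda>x. p2 x - q2 x) = (\<lambda>_. 0)"
  proof (rule core[OF t cs LI_diff[OF Lp1 Lq1] LI_diff[OF Lp2 Lq2]])
    fix x assume x: "\<not> (0 \<le> x \<and> x < t)"
    show "p1 x - q1 x = 0 \<and> p2 x - q2 x = 0" using e1[of x] e2[of x] x unfolding N by simp
  next
    fix x assume x: "0 \<le> x \<and> x < t"
    have e: "- \<i> * p1 x + \<i> * of_real k *
            (integral {0..x} (\<lambda>s. ind t s * p2 s) - integral {x..t} (\<lambda>s. ind t s * p2 s)) =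
          - \<i> * q1 x + \<i> * of_real k *
            (integral {0..x} (\<lambda>s. ind t s * q2 s) - integral {x..t} (\<lambda>s. ind t s * q2 s))"
      using e1[of x] x unfolding N by simp
    have "\<i> * (- \<i> * p1 x + \<i> * of_real k *
            (integral {0..x} (\<lambda>s. ind t s * p2 s) - integral {x..t} (\<lambda>s. ind t s * p2 s))) =
          \<i> * (- \<i> * q1 x + \<i> * of_real k *
            (integral {0..x} (\<lambda>s. ind t s * q2 s) - integral {x..t} (\<lambda>s. ind t s * q2 s)))"
      using e by simp
    then show "p1 x - q1 x = of_real k * (integral {0..x} (\<lambda>s. ind t s * (p2 s - q2 s)) -
        integral {x..t} (\<lambda>s. ind t s * (p2 s - q2 s)))"
      unfolding integral_ind_diff[OF Lp2 Lq2] by (simp add: algebra_simps)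
  next
    fix x assume x: "0 \<le> x \<and> x < t"
    have e: "\<i> * of_real k * (integral {x..t} (\<lambda>s. ind t s * p1 s) - integral {0..x} (\<lambda>s. ind t s * p1 s)) - \<i> * p2 x =
             \<i> * of_real k * (integral {x..t} (\<lambda>s. ind t s * q1 s) - integral {0..x} (\<lambda>s. ind t s * q1 s)) - \<i> * q2 x"
      using e2[of x] x unfolding N by simp
    have "\<i> * (\<i> * of_real k * (integral {x..t} (\<lambda>s. ind t s * p1 s) - integral {0..x} (\<lambda>s. ind t s * p1 s)) - \<i> * p2 x) =
          \<i> * (\<i> * of_real k * (integral {x..t} (\<lambda>s. ind t s * q1 s) - integral {0..x} (\<lambda>s. ind t s * q1 s)) - \<i> * q2 x)"
      using e by simp
    then show "p2 x - q2 x = of_real k * (integral {x..t} (\<lambda>s. ind t s * (p1 s - q1 s)) -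
        integral {0..x} (\<lambda>s. ind t s * (p1 s - q1 s)))"
      unfolding integral_ind_diff[OF Lp1 Lq1] by (simp add: algebra_simps)
  qed
  then have "p1 = q1" "p2 = q2" by (auto simp: fun_eq_iff)
  then show "p = q" using p q by simp
qed

theorem proposition3p5:
  fixes t k :: real
  assumes "0 < t" and "cos (2 * k * t) \<noteq> -1"
  defines "c \<equiv> sin (2 * k * t) / (cos (2 * k * t) + 1)"
  defines "f1 \<equiv> (\<lambda>s. ind t s * (\<i> * cos (2 * k * s) + \<i> * c * sin (2 * k * s)))"
      and "f2 \<equiv> (\<lambda>s. ind t s * (\<i> * c * cos (2 * k * s) - \<i> * sin (2 * k * s)))"
  shows "Ninv t k (ind t, (\<lambda>_. 0)) = (f1, f2) \<and> (f1, f2) \<in> L2_2_on {0..<t}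
       \<and> Ninv t k ((\<lambda>_. 0), ind t) = (\<lambda>s. - f2 s, f1) \<and> (\<lambda>s. - f2 s, f1) \<in> L2_2_on {0..<t}"
proof -
  have F1: "f1 = (\<lambda>s. ind t s * gtr k \<i> (\<i> * c) s)"
    by (simp add: f1_def gtr_def fun_eq_iff algebra_simps)
  have F2: "f2 = (\<lambda>s. ind t s * gtr k (\<i> * c) (-\<i>) s)"
    by (simp add: f2_def gtr_def fun_eq_iff algebra_simps)
  have F3: "(\<lambda>s. - f2 s) = (\<lambda>s. ind t s * gtr k (-(\<i> * c)) \<i> s)"
    by (simp add: f2_def gtr_def fun_eq_iff algebra_simps)
  have inj: "inj_on (Nop t k) L2_2" by (rule Nop_inj[OF assms(1,2)])
  have m1: "(f1, f2) \<in> L2_2" unfolding F1 F2 L2_2_def by (auto intro!: cont_L2 gtr_cont)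
  have m2: "(\<lambda>s. - f2 s, f1) \<in> L2_2" unfolding F1 F3 L2_2_def by (auto intro!: cont_L2 gtr_cont)
  have N1: "Nop t k (f1, f2) = (ind t, \<lambda>_. 0)"
    unfolding F1 F2 c_def by (rule Nop_f(1)[OF assms(2)])
  have N2: "Nop t k (\<lambda>s. - f2 s, f1) = (\<lambda>_. 0, ind t)"
    unfolding F1 F3 c_def by (rule Nop_f(2)[OF assms(2)])
  have o1: "(f1, f2) \<in> L2_2_on {0..<t}"
    using m1 unfolding L2_2_on_def by (auto simp: F1 F2 ind_cases)
  have o2: "(\<lambda>s. - f2 s, f1) \<in> L2_2_on {0..<t}"
    using m2 unfolding L2_2_on_def by (auto simp: F1 F3 ind_cases)
  show ?thesis
    unfolding Ninv_def
    using inv_into_f_eq[OF inj m1 N1] inv_into_f_eq[OF inj m2 N2] o1 o2 by simp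
qed

end
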